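(* Let $0<\lambda_1\le\lambda_2\le1$ and let $K_1,K_2:\mathbb{R}_+\to\mathbb{R}$ be two functions. Define \[ I:=\sup_{\varphi_1,\varphi_2}\int_0^\infty\big(\varphi_1(t)K_1(t)+\varphi_2(t)K_2(t)\big)\,\mathrm{d}t, \] the supremum over all functions $\varphi_i:\mathbb{R}_+\to[0,\lambda_i]$ ($i=1,2$) such that $\varphi_1+\varphi_2$ is nondecreasing, and for $0\le a\le b\le c\le\infty$ define \[ I(a,b,c):=\lambda_1\int_a^c\max\{K_1(t),K_2(t)\}\,\mathrm{d}t+\lambda_1\int_c^\infty(K_1(t)+K_2(t))\,\mathrm{d}t+(\lambda_2-\lambda_1)\int_b^\infty K_2(t)\,\mathrm{d}t . \] Then $I=\sup_{0\le a\le b\le c\le\infty}I(a,b,c)$.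
   Context: All functions are Borel measurable. *)

theory Defs
  imports "HOL-Analysis.Analysis"
begin

definition admissible_pair :: "real \<Rightarrow> real \<Rightarrow> (real \<Rightarrow> real) \<Rightarrow> (real \<Rightarrow> real) \<Rightarrow> bool" where
  "admissible_pair l1 l2 \<phi>1 \<phi>2 \<longleftrightarrow>
     \<phi>1 \<in> borel_measurable borel \<and> \<phi>2 \<in> borel_measurable borel \<and>
     (\<forall>t\<ge>0. 0 \<le> \<phi>1 t \<and> \<phi>1 t \<le> l1) \<and>
     (\<forall>t\<ge>0. 0 \<le> \<phi>2 t \<and> \<phi>2 t \<le> l2) \<and>
     mono_on {0..} (\<lambda>t. \<phi>1 t + \<phi>2 t)"

definition I_sup :: "real \<Rightarrow> real \<Rightarrow> (real \<Rightarrow> real) \<Rightarrow> (real \<Rightarrow> real) \<Rightarrow> real" where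
  "I_sup l1 l2 K1 K2 = Sup {(LINT t:{0..}|lborel. \<phi>1 t * K1 t + \<phi>2 t * K2 t) | \<phi>1 \<phi>2.
      admissible_pair l1 l2 \<phi>1 \<phi>2}"

definition I_abc :: "real \<Rightarrow> real \<Rightarrow> (real \<Rightarrow> real) \<Rightarrow> (real \<Rightarrow> real) \<Rightarrow> real \<Rightarrow> real \<Rightarrow> ereal \<Rightarrow> real" where
  "I_abc l1 l2 K1 K2 a b c =
     l1 * (LINT t:{t. a \<le> t \<and> ereal t < c}|lborel. max (K1 t) (K2 t))
   + l1 * (LINT t:{t. c \<le> ereal t}|lborel. K1 t + K2 t)
   + (l2 - l1) * (LINT t:{b..}|lborel. K2 t)"

end

theory Submission imports Defs begin

lemma ge_set_borel[measurable]: "{t::real. a \<le> ereal t} \<in> sets borel"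
proof (cases a)
  case (real r) then have "{t::real. a \<le> ereal t} = {r..}" by auto
  then show ?thesis by simp
qed auto

lemma lt_set_borel[measurable]: "{t::real. ereal t < a} \<in> sets borel"
proof (cases a)
  case (real r) then have "{t::real. ereal t < a} = {..<r}" by auto
  then show ?thesis by simp
qed auto

lemma ge_set_lborel[measurable]: "{t::real. a \<le> ereal t} \<in> sets lborel" by simp
lemma lt_set_lborel[measurable]: "{t::real. ereal t < a} \<in> sets lborel" by simp

definition Jf :: "real \<Rightarrow> real \<Rightarrow> (real\<Rightarrow>real) \<Rightarrow> (real\<Rightarrow>real) \<Rightarrow> ereal \<Rightarrow> ereal \<Rightarrow> ereal \<Rightarrow> real" where
"Jf l1 l2 K1 K2 a b c =
   l1 * (\<integral>t. indicator {t. a \<le> ereal t} t * max (K1 t) (K2 t) \<partial>lborel)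
 + (l2-l1) * (\<integral>t. indicator {t. b \<le> ereal t} t * K2 t \<partial>lborel)
 + l1 * (\<integral>t. indicator {t. c \<le> ereal t} t * min (K1 t) (K2 t) \<partial>lborel)"

lemma inf_set[simp]: "{t::real. \<infinity> \<le> ereal t} = {}" by auto

definition Sset :: "real \<Rightarrow> real \<Rightarrow> (real\<Rightarrow>real) \<Rightarrow> (real\<Rightarrow>real) \<Rightarrow> real set" where
"Sset l1 l2 K1 K2 = {I_abc l1 l2 K1 K2 a b c | a b c. 0 \<le> a \<and> a \<le> b \<and> ereal b \<le> c}"

lemma tail:
  fixes f :: "real \<Rightarrow> real"
  assumes f: "integrable lborel f"
  shows "(\<lambda>n::nat. \<integral>t. indicator {t. ereal (real n) \<le> ereal t} t * f t \<partial>lborel) \<longlonglongrightarrow> 0"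
proof -
  have fm[measurable]: "f \<in> borel_measurable borel" using borel_measurable_integrable[OF f] by simp
  have "(\<lambda>n::nat. \<integral>t. indicator {t. ereal (real n) \<le> ereal t} t * f t \<partial>lborel) \<longlonglongrightarrow> (\<integral>t. 0 \<partial>(lborel::real measure))"
  proof (rule Bochner_Integration.integral_dominated_convergence[where w="\<lambda>t. \<bar>f t\<bar>"])
    show "integrable lborel (\<lambda>t. \<bar>f t\<bar>)" using f by auto
    show "AE x in lborel. (\<lambda>n. indicator {t. ereal (real n) \<le> ereal t} x * f x) \<longlonglongrightarrow> 0"
    proof (rule AE_I2)
      fix x :: real
      have "eventually (\<lambda>n. indicator {t. ereal (real n) \<le> ereal t} x * f x = 0) sequentially"
        unfolding eventually_sequentially
      proof (intro exI allI impI)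
        fix n assume "Suc (nat \<lceil>x\<rceil>) \<le> n"
        then have "x < real n" by linarith
        then show "indicator {t. ereal (real n) \<le> ereal t} x * f x = 0" by (simp add: indicator_def)
      qed
      then show "(\<lambda>n. indicator {t. ereal (real n) \<le> ereal t} x * f x) \<longlonglongrightarrow> 0"
        by (rule tendsto_eventually)
    qed
    show "\<And>n. AE x in lborel. norm (indicator {t. ereal (real n) \<le> ereal t} x * f x) \<le> \<bar>f x\<bar>"
      by (auto simp: indicator_def)
  qed auto
  then show ?thesis by simp
qed

lemma tail':
  fixes f :: "real \<Rightarrow> real"
  assumes f: "integrable lborel f"
  shows "(\<lambda>n::nat. \<integral>t. indicator (Collect ((\<le>) (real n))) t * f t \<partial>lborel) \<longlonglongrightarrow> 0"
  using tail[OF f] by simp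


definition thr :: "(real \<Rightarrow> real) \<Rightarrow> real \<Rightarrow> ereal" where
  "thr s x = (if {t. 0 \<le> t \<and> x < s t} = {} then \<infinity> else ereal (Inf {t. 0 \<le> t \<and> x < s t}))"

lemma thr_nonneg: "0 \<le> thr s x"
proof -
  have "0 \<le> Inf {t. 0 \<le> t \<and> x < s t}" if "{t. 0 \<le> t \<and> x < s t} \<noteq> {}"
    using that by (intro cInf_greatest) auto
  then show ?thesis unfolding thr_def by auto
qed

lemma thr_mono: assumes "x \<le> y" shows "thr s x \<le> thr s y"
proof (cases "{t. 0 \<le> t \<and> y < s t} = {}")
  case True then show ?thesis by (simp add: thr_def)
next
  case False
  have sub: "{t. 0 \<le> t \<and> y < s t} \<subseteq> {t. 0 \<le> t \<and> x < s t}" using assms by auto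
  with False have ne: "{t. 0 \<le> t \<and> x < s t} \<noteq> {}" by blast
  have "Inf {t. 0 \<le> t \<and> x < s t} \<le> Inf {t. 0 \<le> t \<and> y < s t}"
    by (rule cInf_superset_mono[OF False _ sub]) (auto simp: bdd_below_def)
  then show ?thesis using False ne by (simp add: thr_def)
qed

lemma thr_ae:
  assumes "mono_on {0..} s"
  shows "AE t in lborel. indicator {t. 0 \<le> t \<and> x < s t} t = (indicator {t. thr s x \<le> ereal t} t :: real)"
proof (cases "{t. 0 \<le> t \<and> x < s t} = {}")
  case True
  then show ?thesis by (simp add: thr_def)
next
  case False
  define U where "U = {t. 0 \<le> t \<and> x < s t}"
  define i where "i = Inf U"
  have bdd: "bdd_below U" unfolding U_def bdd_below_def by auto
  have i0: "0 \<le> i" unfolding i_def using False by (intro cInf_greatest) (auto simp: U_def)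
  have "indicator U t = (indicator {t. thr s x \<le> ereal t} t :: real)" if "t \<noteq> i" for t
  proof -
    have "t \<in> U \<longleftrightarrow> i \<le> t"
    proof
      assume "t \<in> U" then show "i \<le> t" unfolding i_def using bdd by (rule cInf_lower)
    next
      assume "i \<le> t"
      with that have "i < t" by simp
      then obtain u where u: "u \<in> U" "u < t" unfolding i_def using False U_def
        by (metis cInf_less_iff bdd)
      then have "0 \<le> u" "x < s u" by (auto simp: U_def)
      moreover have "s u \<le> s t" using assms u \<open>0 \<le> u\<close> by (intro mono_onD[OF assms]) auto
      ultimately show "t \<in> U" using u by (auto simp: U_def)
    qed
    then show ?thesis using False by (simp add: thr_def indicator_def U_def[symmetric] i_def[symmetric])
  qed
  then show ?thesis unfolding U_def[symmetric]
    using AE_lborel_singleton[of i] by (auto elim!: eventually_mono)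
qed

lemma arith_ineq:
  fixes p1 p2 l1 l2 k1 k2 :: real
  assumes "0 \<le> p1" "p1 \<le> l1" "0 \<le> p2" "p2 \<le> l2" "l1 \<le> l2"
  shows "p1 * k1 + p2 * k2 \<le> max k1 k2 * min l1 (max 0 (p1+p2)) + k2 * min (l2-l1) (max 0 (p1+p2-l1))
     + min k1 k2 * min l1 (max 0 (p1+p2-l2))"
proof (cases "k1 \<le> k2")
  have e: "l1 + l2 \<le> p1 + p2 \<Longrightarrow> p1 = l1 \<and> p2 = l2" using assms by linarith
  case True
  have r: "max k1 k2 * min l1 (max 0 (p1+p2)) + k2 * min (l2-l1) (max 0 (p1+p2-l1))
     + min k1 k2 * min l1 (max 0 (p1+p2-l2)) = k1 * (p1+p2) + (k2 - k1) * min l2 (p1+p2)"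
  proof (cases "l1 + l2 \<le> p1 + p2")
    case T2: True
    then have "p1 = l1" "p2 = l2" using assms by linarith+
    then show ?thesis using True assms by (auto simp: max_def min_def algebra_simps)
  next
    case F2: False
    then show ?thesis using True assms by (auto simp: max_def min_def algebra_simps)
  qed
  have "(k2 - k1) * p2 \<le> (k2 - k1) * min l2 (p1+p2)" using True assms by (intro mult_left_mono) auto
  then show ?thesis unfolding r by (simp add: algebra_simps)
next
  case False
  have r: "max k1 k2 * min l1 (max 0 (p1+p2)) + k2 * min (l2-l1) (max 0 (p1+p2-l1))
     + min k1 k2 * min l1 (max 0 (p1+p2-l2)) = k2 * (p1+p2) + (k1 - k2) * min l1 (p1+p2)"
  proof (cases "l1 + l2 \<le> p1 + p2")
    case T2: True
    then have "p1 = l1" "p2 = l2" using assms by linarith+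
    then show ?thesis using False assms by (auto simp: max_def min_def algebra_simps)
  next
    case F2: False
    then show ?thesis using False assms by (auto simp: max_def min_def algebra_simps)
  qed
  have "(k1 - k2) * p1 \<le> (k1 - k2) * min l1 (p1+p2)" using False assms by (intro mult_left_mono) auto
  then show ?thesis unfolding r by (simp add: algebra_simps)
qed

lemma vmeas:
  fixes \<alpha> \<beta> s :: real
  assumes "0 \<le> \<alpha>"
  shows "\<alpha> * measure lborel ({0..1} \<inter> {v. \<beta> + \<alpha> * v < s}) = min \<alpha> (max 0 (s - \<beta>))"
proof (cases "\<alpha> = 0")
  case True then show ?thesis by simp
next
  case False
  then have a: "0 < \<alpha>" using assms by simp
  define x where "x = (s - \<beta>) / \<alpha>"
  have set: "{0..1} \<inter> {v. \<beta> + \<alpha> * v < s} = {0..1} \<inter> {..<x}"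
    using a by (auto simp: x_def field_simps)
  have m: "measure lborel ({0..1::real} \<inter> {..<x}) = min 1 (max 0 x)"
  proof (cases "x \<le> 0")
    case True then have "{0..1::real} \<inter> {..<x} = {}" by auto
    then show ?thesis using True by simp
  next
    case F: False
    show ?thesis
    proof (cases "x \<le> 1")
      case True then have "{0..1::real} \<inter> {..<x} = {0..<x}" by auto
      then show ?thesis using True F by simp
    next
      case False then have "{0..1::real} \<inter> {..<x} = {0..1}" by auto
      then show ?thesis using False F by simp
    qed
  qed
  have "\<alpha> * min 1 (max 0 x) = min \<alpha> (max 0 (s - \<beta>))"
    using a unfolding x_def
    by (simp add: min_def max_def field_simps)
  then show ?thesis unfolding set m .
qed

context
  fixes l1 l2 :: real and K1 K2 :: "real \<Rightarrow> real"
  assumes l: "0 < l1" "l1 \<le> l2" "l2 \<le> 1"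
    and int1: "integrable lborel K1" and int2: "integrable lborel K2"
begin

lemma K1m[measurable]: "K1 \<in> borel_measurable borel"
  using borel_measurable_integrable[OF int1] by simp
lemma K2m[measurable]: "K2 \<in> borel_measurable borel"
  using borel_measurable_integrable[OF int2] by simp

lemma int_ind: fixes f :: "real \<Rightarrow> real" shows "A \<in> sets borel \<Longrightarrow> integrable lborel f \<Longrightarrow> integrable lborel (\<lambda>t. indicator A t * f t)"
  using integrable_real_mult_indicator[of A lborel f] by (simp add: mult.commute)

lemma I_abc_Jf:
  assumes "a \<le> b" "ereal b \<le> c" "0 \<le> a"
  shows "I_abc l1 l2 K1 K2 a b c = Jf l1 l2 K1 K2 (ereal a) (ereal b) c"
proof -
  have ac: "ereal a \<le> c" using assms by (meson ereal_less_eq(3) order.trans)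
  have e1: "(\<integral>t. indicator {t. a \<le> t \<and> ereal t < c} t * max (K1 t) (K2 t) \<partial>lborel)
      + (\<integral>t. indicator {t. c \<le> ereal t} t * (K1 t + K2 t) \<partial>lborel)
     = (\<integral>t. indicator {t. ereal a \<le> ereal t} t * max (K1 t) (K2 t) \<partial>lborel)
      + (\<integral>t. indicator {t. c \<le> ereal t} t * min (K1 t) (K2 t) \<partial>lborel)"
  proof -
    have m: "{t. a \<le> t \<and> ereal t < c} \<in> sets borel"
    proof -
      have "{t. a \<le> t \<and> ereal t < c} = {t. ereal a \<le> ereal t} \<inter> {t. ereal t < c}" by auto
      then show ?thesis by simp
    qed
    have "(\<integral>t. indicator {t. a \<le> t \<and> ereal t < c} t * max (K1 t) (K2 t) \<partial>lborel)
      + (\<integral>t. indicator {t. c \<le> ereal t} t * (K1 t + K2 t) \<partial>lborel)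
      = (\<integral>t. indicator {t. a \<le> t \<and> ereal t < c} t * max (K1 t) (K2 t) 
            + indicator {t. c \<le> ereal t} t * (K1 t + K2 t) \<partial>lborel)"
      by (rule Bochner_Integration.integral_add[symmetric]; rule int_ind) (auto simp: int1 int2 m)
    also have "\<dots> = (\<integral>t. indicator {t. ereal a \<le> ereal t} t * max (K1 t) (K2 t)
            + indicator {t. c \<le> ereal t} t * min (K1 t) (K2 t) \<partial>lborel)"
    proof (rule Bochner_Integration.integral_cong[OF refl])
      fix t
      show "indicator {t. a \<le> t \<and> ereal t < c} t * max (K1 t) (K2 t) 
            + indicator {t. c \<le> ereal t} t * (K1 t + K2 t) = indicator {t. ereal a \<le> ereal t} t * max (K1 t) (K2 t)
            + indicator {t. c \<le> ereal t} t * min (K1 t) (K2 t)"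
        using ac order_trans[OF ac, of "ereal t"] by (cases "c \<le> ereal t"; cases "a \<le> t")
          (auto simp: indicator_def max_def min_def not_le dest: order.strict_trans1)
    qed
    also have "\<dots> = (\<integral>t. indicator {t. ereal a \<le> ereal t} t * max (K1 t) (K2 t) \<partial>lborel)
      + (\<integral>t. indicator {t. c \<le> ereal t} t * min (K1 t) (K2 t) \<partial>lborel)"
      by (rule Bochner_Integration.integral_add; rule int_ind) (auto simp: int1 int2)
    finally show ?thesis .
  qed
  have Z: "(\<integral>t. indicator {b..} t * K2 t \<partial>lborel) = (\<integral>t. indicator {t. ereal b \<le> ereal t} t * K2 t \<partial>lborel)"
    by (simp add: atLeast_def)
  have "I_abc l1 l2 K1 K2 a b c = l1 * ((\<integral>t. indicator {t. a \<le> t \<and> ereal t < c} t * max (K1 t) (K2 t) \<partial>lborel)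
      + (\<integral>t. indicator {t. c \<le> ereal t} t * (K1 t + K2 t) \<partial>lborel)) + (l2 - l1) * (\<integral>t. indicator {b..} t * K2 t \<partial>lborel)"
    unfolding I_abc_def set_lebesgue_integral_def real_scaleR_def by (simp only: distrib_left)
  also have "\<dots> = Jf l1 l2 K1 K2 (ereal a) (ereal b) c"
    unfolding e1 Z Jf_def by (simp only: distrib_left add_ac)
  finally show ?thesis .
qed

lemma adm_bound:
  assumes "admissible_pair l1 l2 p1 p2"
  shows "\<bar>indicator {0..} t * (p1 t * K1 t + p2 t * K2 t)\<bar> \<le> \<bar>K1 t\<bar> + \<bar>K2 t\<bar>"
proof (cases "0 \<le> t")
  case True
  then have h: "0 \<le> p1 t" "p1 t \<le> 1" "0 \<le> p2 t" "p2 t \<le> 1"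
  proof -
    have "0 \<le> p1 t \<and> p1 t \<le> l1" "0 \<le> p2 t \<and> p2 t \<le> l2"
      using assms True unfolding admissible_pair_def by blast+
    then show "0 \<le> p1 t" "p1 t \<le> 1" "0 \<le> p2 t" "p2 t \<le> 1" using l by linarith+
  qed
  have "\<bar>p1 t * K1 t\<bar> \<le> \<bar>K1 t\<bar>" using h by (simp add: abs_mult mult_left_le_one_le)
  moreover have "\<bar>p2 t * K2 t\<bar> \<le> \<bar>K2 t\<bar>" using h by (simp add: abs_mult mult_left_le_one_le)
  ultimately show ?thesis using True by (simp add: indicator_def)
qed (simp add: indicator_def)

lemma adm_integrable:
  assumes "admissible_pair l1 l2 p1 p2"
  shows "integrable lborel (\<lambda>t. indicator {0..} t * (p1 t * K1 t + p2 t * K2 t))"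
proof (rule Bochner_Integration.integrable_bound[of _ "\<lambda>t. \<bar>K1 t\<bar> + \<bar>K2 t\<bar>"])
  show "integrable lborel (\<lambda>t. \<bar>K1 t\<bar> + \<bar>K2 t\<bar>)" using int1 int2 by auto
  have [measurable]: "p1 \<in> borel_measurable borel" "p2 \<in> borel_measurable borel"
    using assms unfolding admissible_pair_def by blast+
  show "(\<lambda>t. indicator {0..} t * (p1 t * K1 t + p2 t * K2 t)) \<in> borel_measurable lborel"
    by measurable
  show "AE x in lborel. norm (indicator {0..} x * (p1 x * K1 x + p2 x * K2 x)) \<le> norm (\<bar>K1 x\<bar> + \<bar>K2 x\<bar>)"
    using adm_bound[OF assms] by auto
qed

lemma adm_le:
  assumes "admissible_pair l1 l2 p1 p2"
  shows "(LINT t:{0..}|lborel. p1 t * K1 t + p2 t * K2 t) \<le> (\<integral>t. \<bar>K1 t\<bar> + \<bar>K2 t\<bar> \<partial>lborel)"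
  unfolding set_lebesgue_integral_def real_scaleR_def
proof (rule integral_mono[OF adm_integrable[OF assms]])
  show "integrable lborel (\<lambda>t. \<bar>K1 t\<bar> + \<bar>K2 t\<bar>)" using int1 int2 by auto
  fix t show "indicator {0..} t * (p1 t * K1 t + p2 t * K2 t) \<le> \<bar>K1 t\<bar> + \<bar>K2 t\<bar>"
    using adm_bound[OF assms, of t] by linarith
qed

lemma adm_bdd: "bdd_above {(LINT t:{0..}|lborel. p1 t * K1 t + p2 t * K2 t) | p1 p2. admissible_pair l1 l2 p1 p2}"
  unfolding bdd_above_def using adm_le by blast

lemma construct:
  assumes "0 \<le> a" "a \<le> b" "ereal b \<le> c"
  shows "\<exists>p1 p2. admissible_pair l1 l2 p1 p2 \<and>
     (LINT t:{0..}|lborel. p1 t * K1 t + p2 t * K2 t) = Jf l1 l2 K1 K2 (ereal a) (ereal b) c"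
proof -
  define p1 where "p1 t = (if c \<le> ereal t then l1 else if a \<le> t \<and> K2 t \<le> K1 t then l1 else 0)" for t
  define p2 where "p2 t = (if c \<le> ereal t then l2 else (if a \<le> t \<and> K1 t < K2 t then l1 else 0)
      + (if b \<le> t then l2 - l1 else 0))" for t
  have cb: "c \<le> ereal t \<Longrightarrow> b \<le> t" for t using assms(3) order_trans[OF assms(3), of "ereal t"] by simp
  have ca: "c \<le> ereal t \<Longrightarrow> a \<le> t" for t using cb assms by force
  have [measurable]: "p1 \<in> borel_measurable borel" unfolding p1_def by measurable
  have [measurable]: "p2 \<in> borel_measurable borel" unfolding p2_def by measurable
  have adm: "admissible_pair l1 l2 p1 p2"
    unfolding admissible_pair_def
  proof (intro conjI allI impI)
    show "mono_on {0..} (\<lambda>t. p1 t + p2 t)"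
    proof (rule mono_onI)
      fix r t :: real assume "r \<in> {0..}" "t \<in> {0..}" "r \<le> t"
      have rt: "c \<le> ereal r \<Longrightarrow> c \<le> ereal t" using \<open>r \<le> t\<close> order_trans by fastforce
      have lv: "p1 x + p2 x = (if c \<le> ereal x then l1 + l2 else (if a \<le> x then l1 else 0) + (if b \<le> x then l2 - l1 else 0))" for x
        unfolding p1_def p2_def by auto
      show "p1 r + p2 r \<le> p1 t + p2 t"
        unfolding lv using l \<open>r \<le> t\<close> rt cb[of r] cb[of t] ca[of r] ca[of t] assms
        by (simp split: if_split)
    qed
  qed (use l in \<open>auto simp: p1_def p2_def\<close>)
  have eq: "indicator {0..} t * (p1 t * K1 t + p2 t * K2 t) =
      l1 * (indicator {t. ereal a \<le> ereal t} t * max (K1 t) (K2 t))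
    + (l2 - l1) * (indicator {t. ereal b \<le> ereal t} t * K2 t)
    + l1 * (indicator {t. c \<le> ereal t} t * min (K1 t) (K2 t))" for t
  proof (cases "c \<le> ereal t")
    case True
    then have "0 \<le> t" using ca[of t] assms by auto
    then show ?thesis using True ca[of t] cb[of t] by (simp add: p1_def p2_def indicator_def max_def min_def algebra_simps)
  next
    case False
    show ?thesis
    proof (cases "a \<le> t")
      case True
      then have "0 \<le> t" using assms by auto
      then show ?thesis using True False by (simp add: p1_def p2_def indicator_def max_def min_def algebra_simps)
    next
      case F2: False
      then have "\<not> b \<le> t" using assms by auto
      then show ?thesis using F2 False by (simp add: p1_def p2_def indicator_def)
    qed
  qed
  have "(LINT t:{0..}|lborel. p1 t * K1 t + p2 t * K2 t) = Jf l1 l2 K1 K2 (ereal a) (ereal b) c"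
  proof -
    have iA: "integrable lborel (\<lambda>t. indicator {t. ereal a \<le> ereal t} t * max (K1 t) (K2 t))"
      by (rule int_ind) (auto simp: int1 int2)
    have iB: "integrable lborel (\<lambda>t. indicator {t. ereal b \<le> ereal t} t * K2 t)"
      by (rule int_ind) (auto simp: int1 int2)
    have iC: "integrable lborel (\<lambda>t. indicator {t. c \<le> ereal t} t * min (K1 t) (K2 t))"
      by (rule int_ind) (auto simp: int1 int2)
    show ?thesis
      unfolding set_lebesgue_integral_def real_scaleR_def eq Jf_def using iA iB iC by simp
  qed
  with adm show ?thesis by blast
qed


lemma S_bdd: "bdd_above (Sset l1 l2 K1 K2)"
proof -
  have "x \<le> (\<integral>t. \<bar>K1 t\<bar> + \<bar>K2 t\<bar> \<partial>lborel)" if xS: "x \<in> Sset l1 l2 K1 K2" for x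
  proof -
    obtain a b c where x: "x = I_abc l1 l2 K1 K2 a b c" "0 \<le> a" "a \<le> b" "ereal b \<le> c"
      using xS by (auto simp: Sset_def)
    obtain p1 p2 where "admissible_pair l1 l2 p1 p2"
      "(LINT t:{0..}|lborel. p1 t * K1 t + p2 t * K2 t) = Jf l1 l2 K1 K2 (ereal a) (ereal b) c"
      using construct[OF x(2-4)] by blast
    then show ?thesis using adm_le I_abc_Jf x by metis
  qed
  then show ?thesis unfolding bdd_above_def by blast
qed

lemma Jf_le:
  assumes "0 \<le> a" "a \<le> b" "b \<le> c"
  shows "Jf l1 l2 K1 K2 a b c \<le> Sup (Sset l1 l2 K1 K2)"
proof -
  have mem: "I_abc l1 l2 K1 K2 x y z \<le> Sup (Sset l1 l2 K1 K2)" if "0 \<le> x" "x \<le> y" "ereal y \<le> z" for x y z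
    by (rule cSup_upper[OF _ S_bdd]) (use that in \<open>auto simp: Sset_def\<close>)
  have memJ: "Jf l1 l2 K1 K2 (ereal x) (ereal y) z \<le> Sup (Sset l1 l2 K1 K2)" if "0 \<le> x" "x \<le> y" "ereal y \<le> z" for x y z
    using mem[OF that] I_abc_Jf[OF that(2,3,1)] by simp
  show ?thesis
  proof (cases b)
    case (real rb)
    then obtain ra where ra: "a = ereal ra" using assms by (cases a) auto
    show ?thesis using memJ[of ra rb c] assms ra real by simp
  next
    case PInf
    then have c: "c = \<infinity>" using assms by simp
    show ?thesis
    proof (cases a)
      case (real ra)
      define X where "X = (\<integral>t. indicator {t. a \<le> ereal t} t * max (K1 t) (K2 t) \<partial>lborel)"
      define T where "T n = (\<integral>t. indicator {t. ereal (real n) \<le> ereal t} t * K2 t \<partial>lborel)" for n :: nat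
      have t: "(\<lambda>n. (l2-l1) * T n) \<longlonglongrightarrow> 0"
        unfolding T_def using tendsto_mult_right_zero[OF tail[OF int2]] by simp
      have eq: "Jf l1 l2 K1 K2 a (ereal (real n)) \<infinity> = l1 * X + (l2-l1) * T n" for n
        by (simp add: Jf_def X_def T_def)
      have eq2: "Jf l1 l2 K1 K2 a b c = l1 * X" by (simp add: Jf_def PInf c X_def)
      have lim: "(\<lambda>n::nat. Jf l1 l2 K1 K2 a (ereal (real n)) \<infinity>) \<longlonglongrightarrow> Jf l1 l2 K1 K2 a b c"
        unfolding eq eq2 using tendsto_add[OF tendsto_const t, of "l1 * X"] by simp
      show ?thesis
      proof (rule LIMSEQ_le_const2[OF lim])
        show "\<exists>N. \<forall>n\<ge>N. Jf l1 l2 K1 K2 a (ereal (real n)) \<infinity> \<le> Sup (Sset l1 l2 K1 K2)"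
        proof (intro exI allI impI)
          fix n assume "nat \<lceil>ra\<rceil> \<le> n"
          then have "ra \<le> real n" by linarith
          then show "Jf l1 l2 K1 K2 a (ereal (real n)) \<infinity> \<le> Sup (Sset l1 l2 K1 K2)"
            using memJ[of ra "real n" \<infinity>] real assms by simp
        qed
      qed
    next
      case PInf
      define T where "T n = (\<integral>t. indicator {t. ereal (real n) \<le> ereal t} t * K2 t \<partial>lborel)" for n :: nat
      define X where "X n = (\<integral>t. indicator {t. ereal (real n) \<le> ereal t} t * max (K1 t) (K2 t) \<partial>lborel)" for n :: nat
      have t: "(\<lambda>n. (l2-l1) * T n) \<longlonglongrightarrow> 0"
        unfolding T_def using tendsto_mult_right_zero[OF tail[OF int2]] by simp
      have x: "(\<lambda>n. l1 * X n) \<longlonglongrightarrow> 0"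
        unfolding X_def using tendsto_mult_right_zero[OF tail[OF integrable_max[OF int1 int2]]] by simp
      have eq: "Jf l1 l2 K1 K2 (ereal (real n)) (ereal (real n)) \<infinity> = l1 * X n + (l2-l1) * T n" for n
        by (simp add: Jf_def X_def T_def)
      have eq2: "Jf l1 l2 K1 K2 a b c = 0" by (simp add: Jf_def PInf c \<open>b = \<infinity>\<close>)
      have lim: "(\<lambda>n::nat. Jf l1 l2 K1 K2 (ereal (real n)) (ereal (real n)) \<infinity>) \<longlonglongrightarrow> Jf l1 l2 K1 K2 a b c"
        unfolding eq eq2 using tendsto_add[OF x t] by simp
      show ?thesis
        by (rule LIMSEQ_le_const2[OF lim]) (use memJ in auto)
    next
      case MInf then show ?thesis using assms by simp
    qed
  next
    case MInf then show ?thesis using assms by simp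
  qed
qed


lemma U_swap:
  fixes f :: "real \<Rightarrow> real"
  assumes "mono_on {0..} s" "s \<in> borel_measurable borel" "integrable lborel f"
  shows "(\<integral>t. indicator {t. 0 \<le> t \<and> x < s t} t * f t \<partial>lborel) = (\<integral>t. indicator {t. thr s x \<le> ereal t} t * f t \<partial>lborel)"
proof (rule integral_cong_AE)
  have [measurable]: "s \<in> borel_measurable borel" "f \<in> borel_measurable borel"
    using assms borel_measurable_integrable[OF assms(3)] by auto
  show "(\<lambda>t. indicator {t. 0 \<le> t \<and> x < s t} t * f t) \<in> borel_measurable lborel" by measurable
  show "(\<lambda>t. indicator {t. thr s x \<le> ereal t} t * f t) \<in> borel_measurable lborel" by measurable
  show "AE t in lborel. indicator {t. 0 \<le> t \<and> x < s t} t * f t = indicator {t. thr s x \<le> ereal t} t * f t"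
    using thr_ae[OF assms(1), of x] by (auto elim!: eventually_mono)
qed

lemma main_le:
  assumes adm: "admissible_pair l1 l2 p1 p2"
  shows "(LINT t:{0..}|lborel. p1 t * K1 t + p2 t * K2 t) \<le> Sup (Sset l1 l2 K1 K2)"
proof -
  have pm[measurable]: "p1 \<in> borel_measurable borel" "p2 \<in> borel_measurable borel"
    using adm unfolding admissible_pair_def by blast+
  have pb: "0 \<le> p1 t" "p1 t \<le> l1" "0 \<le> p2 t" "p2 t \<le> l2" if "0 \<le> t" for t
    using adm that unfolding admissible_pair_def by blast+
  define s where "s t = p1 t + p2 t" for t
  have sm[measurable]: "s \<in> borel_measurable borel" unfolding s_def by measurable
  have smono: "mono_on {0..} s" using adm unfolding admissible_pair_def s_def by blast
  define M where "M = Sup (Sset l1 l2 K1 K2)"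
  define G where "G t v = indicator {0..1} v * (l1 * (if 0 \<le> t \<and> l1 * v < s t then 1 else 0) * max (K1 t) (K2 t)
     + (l2-l1) * (if 0 \<le> t \<and> l1 + (l2 - l1) * v < s t then 1 else 0) * K2 t
     + l1 * (if 0 \<le> t \<and> l2 + l1 * v < s t then 1 else 0) * min (K1 t) (K2 t))" for t v :: real
  have Gm: "(\<lambda>(t,v). G t v) \<in> borel_measurable (lborel \<Otimes>\<^sub>M lborel)"
    unfolding G_def by measurable
  define B where "B t v = indicator {0..1} v * (3 * (\<bar>K1 t\<bar> + \<bar>K2 t\<bar>))" for t v :: real
  have Bm: "(\<lambda>(t,v). B t v) \<in> borel_measurable (lborel \<Otimes>\<^sub>M lborel)"
    unfolding B_def by measurable
  have i01: "integrable lborel (indicator {0..1::real} :: real \<Rightarrow> real)" by simp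
  have Bint: "integrable (lborel \<Otimes>\<^sub>M lborel) (\<lambda>(t,v). B t v)"
  proof (rule lborel_pair.Fubini_integrable[OF Bm])
    have "(\<integral>v. norm (case (t, v) of (t, v) \<Rightarrow> B t v) \<partial>lborel) = 3 * (\<bar>K1 t\<bar> + \<bar>K2 t\<bar>)" for t
      by (simp add: B_def abs_mult)
    then show "integrable lborel (\<lambda>t. \<integral>v. norm (case (t, v) of (t, v) \<Rightarrow> B t v) \<partial>lborel)"
      using int1 int2 by simp
    show "AE t in lborel. integrable lborel (\<lambda>v. case (t, v) of (t, v) \<Rightarrow> B t v)"
      unfolding B_def using i01 by simp
  qed
  have Gb: "\<bar>G t v\<bar> \<le> B t v" for t v
  proof -
    have h: "\<bar>c * i * k\<bar> \<le> \<bar>K1 t\<bar> + \<bar>K2 t\<bar>" if "0 \<le> c" "c \<le> 1" "i = 0 \<or> i = 1" "\<bar>k\<bar> \<le> \<bar>K1 t\<bar> + \<bar>K2 t\<bar>" for c i k :: real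
    proof -
      have "\<bar>c * i * k\<bar> = c * \<bar>i\<bar> * \<bar>k\<bar>" using that by (simp add: abs_mult)
      also have "\<dots> \<le> 1 * 1 * \<bar>k\<bar>" using that by (intro mult_mono) auto
      finally show ?thesis using that by simp
    qed
    have k: "\<bar>max (K1 t) (K2 t)\<bar> \<le> \<bar>K1 t\<bar> + \<bar>K2 t\<bar>" "\<bar>min (K1 t) (K2 t)\<bar> \<le> \<bar>K1 t\<bar> + \<bar>K2 t\<bar>"
      "\<bar>K2 t\<bar> \<le> \<bar>K1 t\<bar> + \<bar>K2 t\<bar>" by auto
    have c: "0 \<le> l1" "l1 \<le> 1" "0 \<le> l2 - l1" "l2 - l1 \<le> 1" using l by auto
    have i: "(if P then 1 else 0::real) = 0 \<or> (if P then 1 else 0::real) = 1" for P by auto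
    define X where "X = l1 * (if 0 \<le> t \<and> l1 * v < s t then 1 else 0) * max (K1 t) (K2 t)
     + (l2-l1) * (if 0 \<le> t \<and> l1 + (l2 - l1) * v < s t then 1 else 0) * K2 t
     + l1 * (if 0 \<le> t \<and> l2 + l1 * v < s t then 1 else 0) * min (K1 t) (K2 t)"
    have "\<bar>X\<bar> \<le> 3 * (\<bar>K1 t\<bar> + \<bar>K2 t\<bar>)"
      unfolding X_def using h[OF c(1,2) i k(1)] h[OF c(3,4) i k(3)] h[OF c(1,2) i k(2)] by (smt (verit))
    moreover have "G t v = indicator {0..1} v * X" unfolding G_def X_def by simp
    ultimately show ?thesis unfolding B_def by (cases "v \<in> {0..1}") auto
  qed
  have intG: "integrable (lborel \<Otimes>\<^sub>M lborel) (\<lambda>(t,v). G t v)"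
    by (rule Bochner_Integration.integrable_bound[OF Bint Gm]) (auto simp: Gb B_def intro!: AE_I2 order_trans[OF Gb])
  have step1: "indicator {0..} t * (p1 t * K1 t + p2 t * K2 t) \<le> (\<integral>v. G t v \<partial>lborel)" for t
  proof (cases "0 \<le> t")
    case False
    then show ?thesis by (simp add: G_def)
  next
    case True
    define A1 where "A1 = {0..1} \<inter> {v::real. 0 + l1 * v < s t}"
    define A2 where "A2 = {0..1} \<inter> {v::real. l1 + (l2 - l1) * v < s t}"
    define A3 where "A3 = {0..1} \<inter> {v::real. l2 + l1 * v < s t}"
    have fin: "A \<subseteq> {0..1} \<Longrightarrow> A \<in> sets lborel \<Longrightarrow> integrable lborel (indicator A :: real \<Rightarrow> real)" for A
    proof (rule integrable_real_indicator)
      assume "A \<subseteq> {0..1}" "A \<in> sets lborel"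
      then have "emeasure lborel A \<le> emeasure lborel {0..1::real}" by (intro emeasure_mono) auto
      then show "emeasure lborel A < \<infinity>" by (simp add: order_le_less_trans)
    qed
    have iA: "integrable lborel (indicator A1 :: real \<Rightarrow> real)" "integrable lborel (indicator A2 :: real \<Rightarrow> real)"
      "integrable lborel (indicator A3 :: real \<Rightarrow> real)"
      unfolding A1_def A2_def A3_def by (intro fin; measurable)+
    have Geq: "G t v = (max (K1 t) (K2 t) * l1) * indicator A1 v + (K2 t * (l2 - l1)) * indicator A2 v
       + (min (K1 t) (K2 t) * l1) * indicator A3 v" for v
      using True unfolding G_def A1_def A2_def A3_def by (simp add: indicator_def)
    have "(\<integral>v. G t v \<partial>lborel) = max (K1 t) (K2 t) * (l1 * measure lborel A1) + K2 t * ((l2 - l1) * measure lborel A2)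
       + min (K1 t) (K2 t) * (l1 * measure lborel A3)"
      unfolding Geq using iA by simp
    also have "\<dots> = max (K1 t) (K2 t) * min l1 (max 0 (s t - 0)) + K2 t * min (l2 - l1) (max 0 (s t - l1))
       + min (K1 t) (K2 t) * min l1 (max 0 (s t - l2))"
      unfolding A1_def A2_def A3_def using l by (simp only: vmeas)
    finally have "(\<integral>v. G t v \<partial>lborel) = max (K1 t) (K2 t) * min l1 (max 0 (p1 t + p2 t)) + K2 t * min (l2 - l1) (max 0 (p1 t + p2 t - l1))
       + min (K1 t) (K2 t) * min l1 (max 0 (p1 t + p2 t - l2))" by (simp add: s_def)
    then show ?thesis using arith_ineq[OF pb[OF True] l(2), of "K1 t" "K2 t"] True by simp
  qed
  have step4: "(\<integral>t. G t v \<partial>lborel) \<le> indicator {0..1} v * M" for v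
  proof (cases "v \<in> {0..1}")
    case False
    then show ?thesis by (simp add: G_def)
  next
    case True
    define U where "U x = {t. 0 \<le> t \<and> x < s t}" for x
    have Um: "U x \<in> sets borel" for x unfolding U_def by measurable
    have Geq: "G t v = l1 * (indicator (U (l1 * v)) t * max (K1 t) (K2 t))
       + (l2 - l1) * (indicator (U (l1 + (l2 - l1) * v)) t * K2 t)
       + l1 * (indicator (U (l2 + l1 * v)) t * min (K1 t) (K2 t))" for t
      using True unfolding G_def U_def by (simp add: indicator_def)
    have i1: "integrable lborel (\<lambda>t. indicator (U x) t * max (K1 t) (K2 t))" for x
      by (rule int_ind[OF Um]) (auto simp: int1 int2)
    have i2: "integrable lborel (\<lambda>t. indicator (U x) t * K2 t)" for x
      by (rule int_ind[OF Um]) (auto simp: int2)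
    have i3: "integrable lborel (\<lambda>t. indicator (U x) t * min (K1 t) (K2 t))" for x
      by (rule int_ind[OF Um]) (auto simp: int1 int2)
    have sw: "(\<integral>t. indicator (U x) t * f t \<partial>lborel) = (\<integral>t. indicator {t. thr s x \<le> ereal t} t * f t \<partial>lborel)"
      if "integrable lborel f" for x and f :: "real \<Rightarrow> real"
      unfolding U_def by (rule U_swap[OF smono sm that])
    have "(\<integral>t. G t v \<partial>lborel) = Jf l1 l2 K1 K2 (thr s (l1 * v)) (thr s (l1 + (l2 - l1) * v)) (thr s (l2 + l1 * v))"
      unfolding Geq Jf_def using i1 i2 i3
      by (simp add: sw[OF integrable_max[OF int1 int2]] sw[OF int2] sw[OF integrable_min[OF int1 int2]])
    also have "\<dots> \<le> M" unfolding M_def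
    proof (rule Jf_le[OF thr_nonneg thr_mono thr_mono])
      have v: "0 \<le> v" "v \<le> 1" using True by auto
      have "l1 * v \<le> l1 * 1" using v l by (intro mult_left_mono) auto
      moreover have "0 \<le> (l2 - l1) * v" using v l by simp
      ultimately show "l1 * v \<le> l1 + (l2 - l1) * v" by simp
      have "(l2 - l1) * v \<le> (l2 - l1) * 1" using v l by (intro mult_left_mono) auto
      moreover have "0 \<le> l1 * v" using v l by simp
      ultimately show "l1 + (l2 - l1) * v \<le> l2 + l1 * v" by simp
    qed
    finally show ?thesis using True by simp
  qed
  have "(LINT t:{0..}|lborel. p1 t * K1 t + p2 t * K2 t) = (\<integral>t. indicator {0..} t * (p1 t * K1 t + p2 t * K2 t) \<partial>lborel)"
    by (simp add: set_lebesgue_integral_def)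
  also have "\<dots> \<le> (\<integral>t. (\<integral>v. G t v \<partial>lborel) \<partial>lborel)"
    by (rule integral_mono[OF adm_integrable[OF adm] lborel_pair.integrable_fst[OF intG] step1])
  also have "\<dots> = (\<integral>v. (\<integral>t. G t v \<partial>lborel) \<partial>lborel)"
    by (rule lborel_pair.Fubini_integral[OF intG, symmetric])
  also have "\<dots> \<le> (\<integral>v. indicator {0..1::real} v * M \<partial>lborel)"
    by (rule integral_mono[OF lborel_pair.integrable_snd[OF intG] _ step4]) simp
  also have "\<dots> = M" by simp
  finally show ?thesis unfolding M_def .
qed


lemma final_int: "I_sup l1 l2 K1 K2 = Sup (Sset l1 l2 K1 K2)"
proof -
  let ?A = "{(LINT t:{0..}|lborel. p1 t * K1 t + p2 t * K2 t) | p1 p2. admissible_pair l1 l2 p1 p2}"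
  have adm0: "admissible_pair l1 l2 (\<lambda>_. 0) (\<lambda>_. 0)"
    unfolding admissible_pair_def using l by (auto intro: mono_onI)
  then have Ane: "?A \<noteq> {}" by blast
  have Sne: "Sset l1 l2 K1 K2 \<noteq> {}" unfolding Sset_def by force
  have le1: "I_sup l1 l2 K1 K2 \<le> Sup (Sset l1 l2 K1 K2)"
    unfolding I_sup_def by (rule cSup_least[OF Ane]) (auto intro: main_le)
  have le2: "Sup (Sset l1 l2 K1 K2) \<le> I_sup l1 l2 K1 K2"
  proof (rule cSup_least[OF Sne])
    fix x assume "x \<in> Sset l1 l2 K1 K2"
    then obtain a b c where x: "x = I_abc l1 l2 K1 K2 a b c" "0 \<le> a" "a \<le> b" "ereal b \<le> c"
      by (auto simp: Sset_def)
    obtain p1 p2 where p: "admissible_pair l1 l2 p1 p2"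
      "(LINT t:{0..}|lborel. p1 t * K1 t + p2 t * K2 t) = Jf l1 l2 K1 K2 (ereal a) (ereal b) c"
      using construct[OF x(2-4)] by blast
    have "x = (LINT t:{0..}|lborel. p1 t * K1 t + p2 t * K2 t)" using p(2) I_abc_Jf[OF x(3,4,2)] x(1) by simp
    then have "x \<in> ?A" using p(1) by blast
    then show "x \<le> I_sup l1 l2 K1 K2" unfolding I_sup_def by (rule cSup_upper[OF _ adm_bdd])
  qed
  show ?thesis using le1 le2 by simp
qed

end

theorem proposition3:
  fixes l1 l2 :: real and K1 K2 :: "real \<Rightarrow> real"
  assumes "0 < l1" "l1 \<le> l2" "l2 \<le> 1"
    and "set_integrable lborel {0..} K1" "set_integrable lborel {0..} K2"
  shows "I_sup l1 l2 K1 K2 =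
    Sup {I_abc l1 l2 K1 K2 a b c | a b c. 0 \<le> a \<and> a \<le> b \<and> ereal b \<le> c}"
proof -
  define K1' where "K1' t = indicator {0..} t * K1 t" for t :: real
  define K2' where "K2' t = indicator {0..} t * K2 t" for t :: real
  have i1: "integrable lborel K1'" using assms(4) unfolding set_integrable_def K1'_def by simp
  have i2: "integrable lborel K2'" using assms(5) unfolding set_integrable_def K2'_def by simp
  have e1: "I_sup l1 l2 K1 K2 = I_sup l1 l2 K1' K2'"
  proof -
    have "(LINT t:{0..}|lborel. p1 t * K1 t + p2 t * K2 t) = (LINT t:{0..}|lborel. p1 t * K1' t + p2 t * K2' t)" for p1 p2
      unfolding set_lebesgue_integral_def K1'_def K2'_def
      by (rule Bochner_Integration.integral_cong) (auto simp: indicator_def)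
    then show ?thesis unfolding I_sup_def by simp
  qed
  have e2: "I_abc l1 l2 K1 K2 a b c = I_abc l1 l2 K1' K2' a b c" if ab: "0 \<le> a" "a \<le> b" "ereal b \<le> c" for a b c
  proof -
    have "(LINT t:{t. a \<le> t \<and> ereal t < c}|lborel. max (K1 t) (K2 t)) = (LINT t:{t. a \<le> t \<and> ereal t < c}|lborel. max (K1' t) (K2' t))"
      unfolding set_lebesgue_integral_def K1'_def K2'_def
      by (rule Bochner_Integration.integral_cong) (use ab in \<open>auto simp: indicator_def\<close>)
    moreover have "(LINT t:{t. c \<le> ereal t}|lborel. K1 t + K2 t) = (LINT t:{t. c \<le> ereal t}|lborel. K1' t + K2' t)"
      unfolding set_lebesgue_integral_def K1'_def K2'_def
    proof (rule Bochner_Integration.integral_cong[OF refl])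
      fix t
      show "indicator {t. c \<le> ereal t} t *\<^sub>R (K1 t + K2 t) = indicator {t. c \<le> ereal t} t *\<^sub>R (indicator {0..} t * K1 t + indicator {0..} t * K2 t)"
      proof (cases "c \<le> ereal t")
        case True
        then have "ereal b \<le> ereal t" using ab(3) by (rule order_trans[rotated])
        then have "0 \<le> t" using ab by simp
        then show ?thesis by simp
      qed simp
    qed
    moreover have "(LINT t:{b..}|lborel. K2 t) = (LINT t:{b..}|lborel. K2' t)"
      unfolding set_lebesgue_integral_def K1'_def K2'_def
      by (rule Bochner_Integration.integral_cong) (use ab in \<open>auto simp: indicator_def\<close>)
    ultimately show ?thesis unfolding I_abc_def by simp
  qed
  have e3: "{I_abc l1 l2 K1 K2 a b c | a b c. 0 \<le> a \<and> a \<le> b \<and> ereal b \<le> c} = Sset l1 l2 K1' K2'"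
    unfolding Sset_def
  proof (rule set_eqI, rule iffI)
    fix x assume "x \<in> {I_abc l1 l2 K1 K2 a b c | a b c. 0 \<le> a \<and> a \<le> b \<and> ereal b \<le> c}"
    then obtain a b c where h: "x = I_abc l1 l2 K1 K2 a b c" "0 \<le> a" "a \<le> b" "ereal b \<le> c" by blast
    then have "x = I_abc l1 l2 K1' K2' a b c" using e2[OF h(2-4)] by simp
    then show "x \<in> {I_abc l1 l2 K1' K2' a b c | a b c. 0 \<le> a \<and> a \<le> b \<and> ereal b \<le> c}"
      using h(2-4) by blast
  next
    fix x assume "x \<in> {I_abc l1 l2 K1' K2' a b c | a b c. 0 \<le> a \<and> a \<le> b \<and> ereal b \<le> c}"
    then obtain a b c where h: "x = I_abc l1 l2 K1' K2' a b c" "0 \<le> a" "a \<le> b" "ereal b \<le> c" by blast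
    then have "x = I_abc l1 l2 K1 K2 a b c" using e2[OF h(2-4)] by simp
    then show "x \<in> {I_abc l1 l2 K1 K2 a b c | a b c. 0 \<le> a \<and> a \<le> b \<and> ereal b \<le> c}"
      using h(2-4) by blast
  qed
  show ?thesis unfolding e1 e3 by (rule final_int[OF assms(1-3) i1 i2])
qed

end
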